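(* Let $\gamma_+,\gamma_-\ge 0$ with $(\gamma_+,\gamma_-)\neq(0,0)$, and let $\mu\in\mathbb{R}$. Define for $x\in(0,1]$ $$f(x)=\gamma_-x+\gamma_+\ln x,\qquad g(x)=\gamma_-\ln x-\frac{\gamma_+}{x},$$ $$\Delta(x)=\gamma_++\gamma_--\frac{\gamma_+}{x}-\gamma_-x+(\gamma_--\gamma_+-\mu)\ln x,$$ and for $x\in(0,1)$, $h(x)=\dfrac{\gamma_-x+\gamma_+/x-(\gamma_++\gamma_-)}{\ln x}$. Let $(z_n)_{n\ge0}$ be a sequence with $0<z_n\le1$ for all $n$ and $z_0<1$, satisfying $$2[f(z_1)-f(z_0)]=\Delta(z_0),$$ $$(n+2)[f(z_{n+1})-f(z_n)]=n[g(z_n)-g(z_{n-1})]+\Delta(z_n)\quad\text{for all } n\ge1.$$ Then: if $h(z_0)>\gamma_--\gamma_+-\mu$, the sequence $(z_n)$ is strictly increasing; if $h(z_0)<\gamma_--\gamma_+-\mu$, it is strictly decreasing; and $(z_n)$ is constant if and only if $h(z_0)=\gamma_--\gamma_+-\mu$. In particular $(z_n)$ is either strictly increasing, strictly decreasing, or constant.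
   Context: These equations are the stationarity conditions of a Lagrange-multiplier problem, where $z_n=p_{n+1}/p_n$ are ratios of consecutive eigenvalues of a passive state with infinite Fock support, but the claim is purely about real sequences as stated. *)

theory Defs
  imports Complex_Main
begin

definition fF :: "real \<Rightarrow> real \<Rightarrow> real \<Rightarrow> real" where
  "fF gp gm x = gm * x + gp * ln x"

definition gG :: "real \<Rightarrow> real \<Rightarrow> real \<Rightarrow> real" where
  "gG gp gm x = gm * ln x - gp / x"

definition Delta :: "real \<Rightarrow> real \<Rightarrow> real \<Rightarrow> real \<Rightarrow> real" where
  "Delta gp gm mu x = gp + gm - gp / x - gm * x + (gm - gp - mu) * ln x"

definition hH :: "real \<Rightarrow> real \<Rightarrow> real \<Rightarrow> real" where
  "hH gp gm x = (gm * x + gp / x - (gp + gm)) / ln x"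

end

theory Submission
  imports Defs
begin


lemma ln_ge: "0 < x \<Longrightarrow> 1 - 1/x \<le> ln (x::real)"
  using ln_le_minus_one[of "1/x"] by (simp add: ln_div)

lemma phi_mono:
  fixes a b :: real
  assumes "0 < a" "a \<le> b" "b < 1 \<or> 1 < a"
  shows "(a - 1) / ln a \<le> (b - 1) / ln b"
proof (rule DERIV_nonneg_imp_increasing_open[OF assms(2)])
  have nz: "x \<noteq> 1" if "a \<le> x" "x \<le> b" for x using assms that by auto
  fix x assume x: "a < x" "x < b"
  hence xp: "x > 0" "x \<noteq> 1" using assms nz[of x] by auto
  hence ln0: "ln x \<noteq> 0" by simp
  have "DERIV (\<lambda>x. (x - 1) / ln x) x :> ((1 * ln x - (x - 1) * (1/x)) / (ln x * ln x))"
    by (rule derivative_eq_intros | use xp ln0 in auto)+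
  moreover have "(1 * ln x - (x - 1) * (1/x)) / (ln x * ln x) \<ge> 0"
  proof -
    have "(x - 1) * (1/x) = 1 - 1/x" using xp by (simp add: field_simps)
    with ln_ge[OF xp(1)] show ?thesis by simp
  qed
  ultimately show "\<exists>y. DERIV (\<lambda>x. (x - 1) / ln x) x :> y \<and> y \<ge> 0" by blast
next
  have nz: "x \<noteq> 1" if "a \<le> x" "x \<le> b" for x using assms that by auto
  show "continuous_on {a..b} (\<lambda>x. (x - 1) / ln x)"
    using assms nz by (intro continuous_intros) auto
qed
lemma hH_mono:
  assumes "gp \<ge> 0" "gm \<ge> 0" "0 < a" "a \<le> b" "b < 1"
  shows "hH gp gm a \<le> hH gp gm b"
proof -
  have eq: "hH gp gm x = gm * ((x-1)/ln x) - gp * ((1/x - 1)/ln (1/x))" if "0<x" "x<1" for x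
  proof -
    have "ln x \<noteq> 0" using that by simp
    then show ?thesis unfolding hH_def using that by (simp add: ln_div field_simps)
  qed
  have 1: "(a-1)/ln a \<le> (b-1)/ln b" using phi_mono[of a b] assms by auto
  have 2: "(1/b-1)/ln (1/b) \<le> (1/a-1)/ln (1/a)"
    using phi_mono[of "1/b" "1/a"] assms by (auto simp: divide_simps)
  show ?thesis using eq[of a] eq[of b] assms mult_left_mono[OF 1, of gm] mult_left_mono[OF 2, of gp]
    by auto
qed

lemma fF_mono: assumes "gp \<ge> 0" "gm \<ge> 0" "0 < x" "x \<le> y" shows "fF gp gm x \<le> fF gp gm y"
  unfolding fF_def using assms by (intro add_mono mult_left_mono) auto

lemma fF_smono: assumes "gp \<ge> 0" "gm \<ge> 0" "(gp,gm) \<noteq> (0,0)" "0 < x" "x < y"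
  shows "fF gp gm x < fF gp gm y"
proof -
  have "gm * x \<le> gm * y" "gp * ln x \<le> gp * ln y" using assms by (auto intro: mult_left_mono)
  moreover have "gm * x < gm * y \<or> gp * ln x < gp * ln y" using assms by auto
  ultimately show ?thesis unfolding fF_def by linarith
qed

lemma gG_smono: assumes "gp \<ge> 0" "gm \<ge> 0" "(gp,gm) \<noteq> (0,0)" "0 < x" "x < y"
  shows "gG gp gm x < gG gp gm y"
proof -
  have "gm * ln x \<le> gm * ln y" using assms by (auto intro: mult_left_mono)
  moreover have "gp / y \<le> gp / x" using assms by (auto intro: divide_left_mono)
  moreover have "gm * ln x < gm * ln y \<or> gp / y < gp / x" using assms
    by (auto intro: divide_strict_left_mono)
  ultimately show ?thesis unfolding gG_def by linarith
qed

lemma Delta_eq: assumes "0 < x" "x < 1"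
  shows "Delta gp gm mu x = ((gm - gp - mu) - hH gp gm x) * ln x"
proof -
  have "ln x \<noteq> 0" using assms by simp
  thus ?thesis unfolding Delta_def hH_def by (simp add: field_simps)
qed



theorem lemma3:
  fixes gp gm mu :: real and z :: "nat \<Rightarrow> real"
  assumes "gp \<ge> 0" and "gm \<ge> 0" and "(gp, gm) \<noteq> (0, 0)"
    and "\<And>n. 0 < z n \<and> z n \<le> 1"
    and "z 0 < 1"
    and "2 * (fF gp gm (z 1) - fF gp gm (z 0)) = Delta gp gm mu (z 0)"
    and "\<And>n. n \<ge> 1 \<Longrightarrow>
           real (n + 2) * (fF gp gm (z (n + 1)) - fF gp gm (z n))
           = real n * (gG gp gm (z n) - gG gp gm (z (n - 1))) + Delta gp gm mu (z n)"
  shows "(hH gp gm (z 0) > gm - gp - mu \<longrightarrow> strict_mono z)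
    \<and> (hH gp gm (z 0) < gm - gp - mu \<longrightarrow> (\<forall>m n. m < n \<longrightarrow> z n < z m))
    \<and> ((\<forall>n. z n = z 0) \<longleftrightarrow> hH gp gm (z 0) = gm - gp - mu)
    \<and> (strict_mono z \<or> (\<forall>m n. m < n \<longrightarrow> z n < z m) \<or> (\<forall>n. z n = z 0))"
proof -
  define c where "c = gm - gp - mu"
  define f where "f = fF gp gm"
  define g where "g = gG gp gm"
  define D where "D = Delta gp gm mu"
  define h where "h = hH gp gm"
  note gp = assms(1) and gm = assms(2) and nz = assms(3)
  have zp: "0 < z n" "z n \<le> 1" for n using assms(4)[of n] by auto
  have z0: "z 0 < 1" by fact
  have base: "2 * (f (z 1) - f (z 0)) = D (z 0)" using assms(6) unfolding f_def D_def .
  have rec: "real (n + 3) * (f (z (n + 2)) - f (z (n+1)))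
       = real (n+1) * (g (z (n+1)) - g (z n)) + D (z (n+1))" for n
    using assms(7)[of "Suc n"] unfolding f_def g_def D_def
    by (simp add: numeral_3_eq_3 numeral_2_eq_2 add.commute)
  have Deq: "D x = (c - h x) * ln x" if "0 < x" "x < 1" for x
    using Delta_eq[OF that] unfolding D_def c_def h_def .
  have D1: "D 1 = 0" unfolding D_def Delta_def by simp
  have fmono: "f x \<le> f y" if "0 < x" "x \<le> y" for x y
    using fF_mono[OF gp gm that] unfolding f_def .
  have fsmono: "f x < f y" if "0 < x" "x < y" for x y
    using fF_smono[OF gp gm nz that] unfolding f_def .
  have gsmono: "g x < g y" if "0 < x" "x < y" for x y
    using gG_smono[OF gp gm nz that] unfolding g_def .
  have hmono: "h x \<le> h y" if "0 < x" "x \<le> y" "y < 1" for x y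
    using hH_mono[OF gp gm that] unfolding h_def .
  have ln0: "ln (z 0) < 0" using zp z0 by simp

  have inc: "strict_mono z" if H: "h (z 0) > c"
  proof -
    have "z n < z (Suc n) \<and> z 0 \<le> z n" for n
    proof (induction n)
      case 0
      have "D (z 0) > 0" using Deq[OF zp(1) z0] H ln0 by (simp add: mult_neg_neg)
      hence "f (z 0) < f (z 1)" using base by simp
      hence "z 0 < z 1" using fmono[of "z 1" "z 0"] zp by force
      then show ?case by simp
    next
      case (Suc n)
      have lt: "z n < z (n+1)" and ge: "z 0 \<le> z (n+1)" using Suc by auto
      have "D (z (n+1)) \<ge> 0"
      proof (cases "z (n+1) = 1")
        case True then show ?thesis using D1 by simp
        next
        case False
        hence lt1: "z (n+1) < 1" using zp(2)[of "n+1"] by simp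
        have "h (z (n+1)) \<ge> h (z 0)" using hmono[OF zp(1) ge lt1] .
        moreover have "ln (z (n+1)) < 0" using lt1 zp(1)[of "n+1"] by simp
        ultimately show ?thesis using Deq[OF zp(1) lt1] H
          by (simp add: mult_nonpos_nonpos)
      qed
      moreover have "g (z (n+1)) - g (z n) > 0" using gsmono[OF zp(1) lt] by simp
      ultimately have "real (n + 3) * (f (z (n + 2)) - f (z (n+1))) > 0"
        unfolding rec by (simp add: add_pos_nonneg)
      hence "f (z (n + 2)) > f (z (n+1))" by (simp add: zero_less_mult_iff)
      hence "z (n+1) < z (n+2)" using fmono[of "z (n+2)" "z (n+1)"] zp by force
      then show ?case using ge by simp
    qed
    then show ?thesis unfolding strict_mono_Suc_iff by blast
  qed

  have dec: "\<forall>m n. m < n \<longrightarrow> z n < z m" if H: "h (z 0) < c"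
  proof -
    have "z (Suc n) < z n \<and> z n \<le> z 0" for n
    proof (induction n)
      case 0
      have "D (z 0) < 0" using Deq[OF zp(1) z0] H ln0 by (simp add: mult_pos_neg)
      hence "f (z 1) < f (z 0)" using base by simp
      hence "z 1 < z 0" using fmono[of "z 0" "z 1"] zp by force
      then show ?case by simp
    next
      case (Suc n)
      have lt: "z (n+1) < z n" and le: "z (n+1) \<le> z 0" using Suc by auto
      have lt1: "z (n+1) < 1" using le z0 by simp
      have "h (z (n+1)) \<le> h (z 0)" using hmono[OF zp(1) le z0] .
      moreover have "ln (z (n+1)) < 0" using lt1 zp(1)[of "n+1"] by simp
      ultimately have "D (z (n+1)) < 0" using Deq[OF zp(1) lt1] H
        by (simp add: mult_pos_neg)
      moreover have "g (z (n+1)) - g (z n) < 0" using gsmono[OF zp(1) lt] by simp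
      ultimately have "real (n + 3) * (f (z (n + 2)) - f (z (n+1))) < 0"
        unfolding rec by (simp add: mult_pos_neg add_neg_neg)
      hence "f (z (n + 2)) < f (z (n+1))" by (simp add: mult_less_0_iff)
      hence "z (n+2) < z (n+1)" using fmono[of "z (n+1)" "z (n+2)"] zp by force
      then show ?case using le by simp
    qed
    hence "\<And>n. (\<lambda>n. - z n) n < (\<lambda>n. - z n) (Suc n)" by simp
    from lift_Suc_mono_less[of "\<lambda>n. - z n", OF this] show ?thesis by simp
  qed

  have const: "(\<forall>n. z n = z 0) \<longleftrightarrow> h (z 0) = c"
  proof
    assume A: "\<forall>n. z n = z 0"
    hence "D (z 0) = 0" using base by (metis diff_self mult_zero_right)
    thus "h (z 0) = c" using Deq[OF zp(1) z0] ln0 by simp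
  next
    assume H: "h (z 0) = c"
    have D0: "D (z 0) = 0" using Deq[OF zp(1) z0] H by simp
    have feq: "z x = z y" if "f (z x) = f (z y)" for x y
      using fsmono[of "z x" "z y"] fsmono[of "z y" "z x"] zp that
      by (metis less_irrefl linorder_neqE_linordered_idom)
    have "z n = z 0 \<and> z (Suc n) = z 0" for n
    proof (induction n)
      case 0
      have "f (z 1) = f (z 0)" using base D0 by simp
      then show ?case using feq by simp
    next
      case (Suc n)
      hence "z n = z 0" "z (n+1) = z 0" by auto
      hence "real (n + 3) * (f (z (n + 2)) - f (z (n+1))) = 0"
        unfolding rec using D0 by simp
      hence "f (z (n + 2)) = f (z (n+1))" by simp
      hence "z (n+2) = z (n+1)" using feq by blast
      then show ?case using Suc by simp
    qed
    then show "\<forall>n. z n = z 0" by blast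
  qed

  show ?thesis
    using inc dec const unfolding c_def h_def
    by (metis linorder_neqE_linordered_idom)
qed
end
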